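(* Let $n\ge 1$ be an integer and let $\mathcal{H}_r$, $\mathcal{H}_{r'}$ be separable Hilbert spaces with $\dim\mathcal{H}_r=\dim\mathcal{H}_{r'}$. Let $\mathcal{H}_c\cong\mathbb{C}^n$ and $\mathcal{H}_{c'}\cong\mathbb{C}^n$ have orthonormal "time" bases $(|\tau\rangle_c)_{\tau\in\mathbb{Z}_n}$ and $(|\tau\rangle_{c'})_{\tau\in\mathbb{Z}_n}$, and let $X_n$, $X_n'$ be the shift operators $X_n|\tau\rangle_c=|\tau+1 \bmod n\rangle_c$, $X_n'|\tau\rangle_{c'}=|\tau+1\bmod n\rangle_{c'}$. Let $U_r$ and $U_{r'}$ be unitary operators on $\mathcal{H}_r$ and $\mathcal{H}_{r'}$ with $U_r^n=I_r$ and $U_{r'}^n=I_{r'}$, and set $U=X_n\otimes U_r$ and $U'=X_n'\otimes U_{r'}$. Let $|\psi(0)\rangle_r\in\mathcal{H}_r$ and $|\psi'(0)\rangle_{r'}\in\mathcal{H}_{r'}$ be any unit vectors, and for $\tau\in\mathbb{Z}_n$ define $|\Psi(\tau)\rangle=|\tau\rangle_c\,U_r^\tau|\psi(0)\rangle_r$ and $|\Psi'(\tau)\rangle=|\tau\rangle_{c'}\,U_{r'}^\tau|\psi'(0)\rangle_{r'}$. Then there exists a unitary operator $S:\mathcal{H}_c\otimes\mathcal{H}_r\to\mathcal{H}_{c'}\otimes\mathcal{H}_{r'}$ such that $|\Psi'(\tau)\rangle=S|\Psi(\tau)\rangle$ for all $\tau\in\mathbb{Z}_n$, and $U'=SUS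^{-1}$.
   Context: This is the finite discrete-time Page-Wootters setting: a clock with $n$ ticks whose one-step evolution is the cyclic shift, a "rest of the world" with one-step unitary evolution $U_r$ satisfying the cyclicity condition $U_r^n=I$, total one-step evolution $U=X_n\otimes U_r$, and temporal states $|\Psi(\tau)\rangle$ as defined in the claim. *)

theory Defs
  imports "HOL-Analysis.Analysis"
begin

text \<open>A complex Hilbert space is modelled as a real Hilbert space (type of sort
  real_inner and complete_space) together with an orthogonal complex structure J
  (multiplication by the imaginary unit).\<close>

definition complex_structure :: "('a::real_inner \<Rightarrow> 'a) \<Rightarrow> bool" where
  "complex_structure J \<longleftrightarrow> linear J \<and> (\<forall>x. J (J x) = - x) \<and>
     (\<forall>x y. inner (J x) (J y) = inner x y)"

definition cscale :: "('a::real_vector \<Rightarrow> 'a) \<Rightarrow> complex \<Rightarrow> 'a \<Rightarrow> 'a" where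
  "cscale J c x = Re c *\<^sub>R x + Im c *\<^sub>R J x"

text \<open>complex inner product, antilinear in the first argument\<close>
definition cinner :: "('a::real_inner \<Rightarrow> 'a) \<Rightarrow> 'a \<Rightarrow> 'a \<Rightarrow> complex" where
  "cinner J x y = Complex (inner x y) (inner (J x) y)"

definition cspan :: "('a::real_vector \<Rightarrow> 'a) \<Rightarrow> 'a set \<Rightarrow> 'a set" where
  "cspan J B = {(\<Sum>b\<in>F. cscale J (c b) b) | F c. finite F \<and> F \<subseteq> B}"

definition separable_hilbert :: "('a::{real_inner,complete_space} \<Rightarrow> 'a) \<Rightarrow> bool" where
  "separable_hilbert J \<longleftrightarrow> complex_structure J \<and>
     (\<exists>D::'a set. countable D \<and> closure D = UNIV)"

definition c_onb :: "('a::real_inner \<Rightarrow> 'a) \<Rightarrow> 'a set \<Rightarrow> bool" where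
  "c_onb J B \<longleftrightarrow> (\<forall>b\<in>B. \<forall>b'\<in>B. cinner J b b' = (if b = b' then 1 else 0)) \<and>
     closure (cspan J B) = UNIV"

definition same_hilbert_dim ::
    "('a::real_inner \<Rightarrow> 'a) \<Rightarrow> ('b::real_inner \<Rightarrow> 'b) \<Rightarrow> bool" where
  "same_hilbert_dim J J' \<longleftrightarrow>
     (\<exists>B B' f. c_onb J B \<and> c_onb J' B' \<and> bij_betw f B B')"

definition cunitary :: "('a::real_normed_vector \<Rightarrow> 'a) \<Rightarrow> ('b::real_normed_vector \<Rightarrow> 'b)
    \<Rightarrow> ('a \<Rightarrow> 'b) \<Rightarrow> bool" where
  "cunitary J J' U \<longleftrightarrow> (\<forall>x y. U (x + y) = U x + U y) \<and>
     (\<forall>c x. U (cscale J c x) = cscale J' c (U x)) \<and>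
     (\<forall>x. norm (U x) = norm x) \<and> surj U"

text \<open>The tensor product C^n (x) H, with C^n carrying the orthonormal time basis
  |0>,...,|n-1>, is identified with H^n: a vector is a function nat => H vanishing
  from index n on; f k is the component along |k>.\<close>

definition clock_space :: "nat \<Rightarrow> (nat \<Rightarrow> 'a::zero) set" where
  "clock_space n = {f. \<forall>k\<ge>n. f k = 0}"

definition ket :: "nat \<Rightarrow> 'a::zero \<Rightarrow> nat \<Rightarrow> 'a" where
  "ket \<tau> v = (\<lambda>k. if k = \<tau> then v else 0)"

definition tadd :: "(nat \<Rightarrow> 'a::plus) \<Rightarrow> (nat \<Rightarrow> 'a) \<Rightarrow> nat \<Rightarrow> 'a" where
  "tadd f g = (\<lambda>k. f k + g k)"

definition tcscale :: "('a::real_vector \<Rightarrow> 'a) \<Rightarrow> complex \<Rightarrow> (nat \<Rightarrow> 'a) \<Rightarrow> nat \<Rightarrow> 'a" where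
  "tcscale J c f = (\<lambda>k. cscale J c (f k))"

definition tnorm :: "nat \<Rightarrow> (nat \<Rightarrow> 'a::real_normed_vector) \<Rightarrow> real" where
  "tnorm n f = sqrt (\<Sum>k<n. (norm (f k))\<^sup>2)"

definition tunitary :: "nat \<Rightarrow> ('a::real_normed_vector \<Rightarrow> 'a) \<Rightarrow> ('b::real_normed_vector \<Rightarrow> 'b)
    \<Rightarrow> ((nat \<Rightarrow> 'a) \<Rightarrow> (nat \<Rightarrow> 'b)) \<Rightarrow> bool" where
  "tunitary n J J' S \<longleftrightarrow> bij_betw S (clock_space n) (clock_space n) \<and>
     (\<forall>f\<in>clock_space n. \<forall>g\<in>clock_space n. S (tadd f g) = tadd (S f) (S g)) \<and>
     (\<forall>c. \<forall>f\<in>clock_space n. S (tcscale J c f) = tcscale J' c (S f)) \<and>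
     (\<forall>f\<in>clock_space n. tnorm n (S f) = tnorm n f)"

text \<open>matrix of the shift X_n in the time basis: X_n |j> = |(j+1) mod n>\<close>
definition shift_mat :: "nat \<Rightarrow> nat \<Rightarrow> nat \<Rightarrow> complex" where
  "shift_mat n k j = (if k = (j + 1) mod n then 1 else 0)"

definition tensor_op :: "nat \<Rightarrow> ('a::real_vector \<Rightarrow> 'a) \<Rightarrow> (nat \<Rightarrow> nat \<Rightarrow> complex)
    \<Rightarrow> ('a \<Rightarrow> 'a) \<Rightarrow> (nat \<Rightarrow> 'a) \<Rightarrow> nat \<Rightarrow> 'a" where
  "tensor_op n J A B f = (\<lambda>k. if k < n then (\<Sum>j<n. cscale J (A k j) (B (f j))) else 0)"

end

theory Submission
  imports Defs
begin


lemma cs_lin: "complex_structure J \<Longrightarrow> linear J" by (simp add: complex_structure_def)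
lemma cs_JJ: "complex_structure J \<Longrightarrow> J (J x) = - x" by (simp add: complex_structure_def)
lemma cs_inner: "complex_structure J \<Longrightarrow> inner (J x) (J y) = inner x y" by (simp add: complex_structure_def)

lemma cs_swap: assumes "complex_structure J" shows "inner x (J y) = - inner (J x) y"
proof -
  have "inner x (J y) = inner (J x) (J (J y))" using cs_inner[OF assms] by simp
  also have "\<dots> = - inner (J x) y" using cs_JJ[OF assms] by simp
  finally show ?thesis .
qed

lemma cs_self: assumes "complex_structure J" shows "inner x (J x) = 0"
  using cs_swap[OF assms, of x x] by (simp add: inner_commute)

lemma cs_norm: assumes "complex_structure J" shows "norm (J x) = norm x"
  using cs_inner[OF assms, of x x] by (simp add: norm_eq_sqrt_inner)

lemma cs_add: "complex_structure J \<Longrightarrow> J (x + y) = J x + J y"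
  using cs_lin linear_add by blast
lemma cs_scale: "complex_structure J \<Longrightarrow> J (r *\<^sub>R x) = r *\<^sub>R J x"
  using cs_lin linear_scale by blast
lemma cs_minus: "complex_structure J \<Longrightarrow> J (- x) = - J x"
  using cs_lin linear_neg by blast
lemma cs_diff: "complex_structure J \<Longrightarrow> J (x - y) = J x - J y"
  using cs_lin linear_diff by blast

lemma cs_bl: assumes "complex_structure J" shows "bounded_linear J"
  by (rule bounded_linear_intro[where K=1]) (use cs_add[OF assms] cs_scale[OF assms] cs_norm[OF assms] in auto)

lemma cscale_add: "complex_structure J \<Longrightarrow> cscale J c (x + y) = cscale J c x + cscale J c y"
  by (simp add: cscale_def cs_add scaleR_add_right)
lemma cscale_scale: "complex_structure J \<Longrightarrow> cscale J c (r *\<^sub>R x) = r *\<^sub>R cscale J c x"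
  by (simp add: cscale_def cs_scale scaleR_add_right mult.commute)
lemma cscale_lin: "complex_structure J \<Longrightarrow> linear (cscale J c)"
  by (rule linearI) (simp_all add: cscale_add cscale_scale)
lemma cscale_bl: assumes "complex_structure J" shows "bounded_linear (cscale J c)"
proof -
  have "bounded_linear (\<lambda>x. Re c *\<^sub>R x + Im c *\<^sub>R J x)"
    by (intro bounded_linear_add bounded_linear_scaleR_right bounded_linear_ident bounded_linear_compose[OF bounded_linear_scaleR_right cs_bl[OF assms]])
  then show ?thesis unfolding cscale_def[abs_def] .
qed
lemma cscale_mult: "complex_structure J \<Longrightarrow> cscale J c (cscale J d x) = cscale J (c*d) x"
  by (simp add: cscale_def cs_add cs_scale cs_JJ algebra_simps)
lemma cscale_one[simp]: "cscale J 1 x = x" by (simp add: cscale_def)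
lemma cscale_zero[simp]: "cscale J 0 x = 0" by (simp add: cscale_def)
lemma cscale_zero_right: "complex_structure J \<Longrightarrow> cscale J c 0 = 0"
  using cscale_lin linear_0 by blast
lemma cscale_real: "cscale J (complex_of_real r) x = r *\<^sub>R x" by (simp add: cscale_def)
lemma cscale_ii: "cscale J \<i> x = J x" by (simp add: cscale_def)
lemma cscale_addc: "cscale J (c + d) x = cscale J c x + cscale J d x"
  by (simp add: cscale_def algebra_simps)
lemma cscale_diffc: "cscale J (c - d) x = cscale J c x - cscale J d x"
  by (simp add: cscale_def algebra_simps)
lemma cscale_sum: "complex_structure J \<Longrightarrow> cscale J c (sum f F) = (\<Sum>x\<in>F. cscale J c (f x))"
  using cscale_lin linear_sum by blast
lemma cscale_sumc: "cscale J (sum f F) x = (\<Sum>i\<in>F. cscale J (f i) x)"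
  by (induction F rule: infinite_finite_induct) (simp_all add: cscale_addc)

lemma inner_cscale: assumes "complex_structure J"
  shows "inner (cscale J a x) (cscale J b y) = Re (cnj a * b * cinner J x y)"
  using cs_swap[OF assms, of x y] cs_inner[OF assms, of x y]
  by (simp add: cscale_def cinner_def inner_add_left inner_add_right algebra_simps)



lemma cunitary_diff: assumes "cunitary J J' U" shows "U (x - y) = U x - U y"
proof -
  have "U (x - y) + U y = U x" using assms unfolding cunitary_def by (metis diff_add_cancel)
  then show ?thesis by (metis add_diff_cancel)
qed

lemma cunitary_inj: assumes "cunitary J J' U" shows "inj U"
proof (rule injI)
  fix x y assume "U x = U y"
  then have "norm (U (x - y)) = 0" using cunitary_diff[OF assms] by simp
  then show "x = y" using assms unfolding cunitary_def by simp
qed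

lemma cunitary_comp: assumes "cunitary J1 J2 A" "cunitary J2 J3 B" shows "cunitary J1 J3 (B \<circ> A)"
  using assms unfolding cunitary_def by (auto simp: surj_def) metis

lemma cunitary_id: "cunitary (J::'a::real_normed_vector \<Rightarrow> 'a) J id" by (simp add: cunitary_def)

lemma cunitary_funpow: assumes "cunitary J J U" shows "cunitary J J (U ^^ k)"
proof (induction k)
  case 0 then show ?case unfolding funpow.simps(1) by (rule cunitary_id)
next
  case (Suc k) then show ?case using cunitary_comp[OF Suc assms] by (simp only: funpow.simps(2))
qed

lemma cunitaryI_lin:
  assumes "complex_structure J" "complex_structure J'" "linear R" "\<And>x. R (J x) = J' (R x)"
    "\<And>x. norm (R x) = norm x" "surj R"
  shows "cunitary J J' R"
  unfolding cunitary_def using assms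
  by (simp add: linear_add linear_scale cscale_def)

lemma extend_unitary:
  fixes Tz :: "'a::{real_inner,complete_space} \<Rightarrow> 'b::{real_inner,complete_space}"
  assumes cs: "complex_structure J" and cs': "complex_structure J'"
    and dense: "closure D = UNIV"
    and Dadd: "\<And>x y. x \<in> D \<Longrightarrow> y \<in> D \<Longrightarrow> x + y \<in> D"
    and Dsc: "\<And>c x. x \<in> D \<Longrightarrow> cscale J c x \<in> D"
    and Tadd: "\<And>x y. x \<in> D \<Longrightarrow> y \<in> D \<Longrightarrow> Tz (x + y) = Tz x + Tz y"
    and Tsc: "\<And>c x. x \<in> D \<Longrightarrow> Tz (cscale J c x) = cscale J' c (Tz x)"
    and Tn: "\<And>x. x \<in> D \<Longrightarrow> norm (Tz x) = norm x"
    and dense': "closure (Tz ` D) = UNIV"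
  shows "\<exists>g. cunitary J J' g"
proof -
  have Dneg: "- x \<in> D" if "x \<in> D" for x
    using Dsc[OF that, of "-1"] by (simp add: cscale_def)
  have Ddiff: "x - y \<in> D" if "x \<in> D" "y \<in> D" for x y
    using Dadd[OF that(1) Dneg[OF that(2)]] by simp
  have Tdiff: "Tz (x - y) = Tz x - Tz y" if "x \<in> D" "y \<in> D" for x y
    using Tadd[OF Ddiff[OF that] that(2)] by (simp add: algebra_simps)
  have uc: "uniformly_continuous_on D Tz"
    unfolding uniformly_continuous_on_def dist_norm
    by (metis Tdiff Tn Ddiff)
  obtain g where gu: "uniformly_continuous_on (closure D) g" and gT: "\<And>x. x \<in> D \<Longrightarrow> Tz x = g x"
    using uniformly_continuous_on_extension_on_closure[OF uc] by metis
  have contg: "continuous_on UNIV g"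
    using uniformly_continuous_imp_continuous[OF gu] dense by simp
  have gn: "norm (g x) = norm x" for x
  proof -
    have "continuous_on (closure D) (\<lambda>x. norm (g x) - norm x)"
      using dense contg by (auto intro!: continuous_intros)
    from continuous_constant_on_closure[OF this, of 0 x] show ?thesis
      using gT Tn dense by auto
  qed
  have gadd1: "g (x + y) = g x + g y" if "y \<in> D" for x y
  proof -
    have "continuous_on (closure D) (\<lambda>x. g (x + y) - g x - g y)"
      using dense by (auto intro!: continuous_intros continuous_on_compose2[OF contg])
    from continuous_constant_on_closure[OF this, of 0 x] show ?thesis
      using gT Tadd Dadd that dense by (auto simp: algebra_simps)
  qed
  have gadd: "g (x + y) = g x + g y" for x y
  proof -
    have "continuous_on (closure D) (\<lambda>y. g (x + y) - g x - g y)"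
      using dense by (auto intro!: continuous_intros continuous_on_compose2[OF contg])
    from continuous_constant_on_closure[OF this, of 0 y] show ?thesis
      using gadd1 dense by (auto simp: algebra_simps)
  qed
  have gsc: "g (cscale J c x) = cscale J' c (g x)" for c x
  proof -
    have "continuous_on (closure D) (\<lambda>x. g (cscale J c x) - cscale J' c (g x))"
      using dense by (auto intro!: continuous_intros continuous_on_compose2[OF contg]
          continuous_on_compose2[OF linear_continuous_on[OF cscale_bl[OF cs']]]
          linear_continuous_on[OF cscale_bl[OF cs]])
    from continuous_constant_on_closure[OF this, of 0 x] show ?thesis
      using gT Tsc Dsc dense by auto
  qed
  have bl: "bounded_linear g"
  proof (rule bounded_linear_intro[where K=1])
    show "g (r *\<^sub>R x) = r *\<^sub>R g x" for r x
      using gsc[of "complex_of_real r" x] by (simp add: cscale_real)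
  qed (use gadd gn in auto)
  have "complete (g ` UNIV)"
    by (rule complete_isometric_image[where e=1]) (use bl gn complete_UNIV in auto)
  then have cl: "closed (range g)" by (rule complete_imp_closed)
  have "Tz ` D \<subseteq> range g" using gT by auto
  then have "closure (Tz ` D) \<subseteq> range g" using cl closure_minimal by blast
  then have "surj g" using dense' by auto
  then show ?thesis unfolding cunitary_def using gadd gsc gn by blast
qed



lemma onb_orth: "c_onb J B \<Longrightarrow> b \<in> B \<Longrightarrow> b' \<in> B \<Longrightarrow> cinner J b b' = (if b = b' then 1 else 0)"
  by (simp add: c_onb_def)

lemma norm_sum_onb:
  assumes cs: "complex_structure J" and onb: "c_onb J B" and fin: "finite F"
    and inj: "inj_on h F" and sub: "h ` F \<subseteq> B"
  shows "(norm (\<Sum>b\<in>F. cscale J (c b) (h b)))\<^sup>2 = (\<Sum>b\<in>F. (cmod (c b))\<^sup>2)"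
proof -
  have "(norm (\<Sum>b\<in>F. cscale J (c b) (h b)))\<^sup>2
      = inner (\<Sum>b\<in>F. cscale J (c b) (h b)) (\<Sum>b\<in>F. cscale J (c b) (h b))"
    by (simp add: power2_norm_eq_inner)
  also have "\<dots> = (\<Sum>b\<in>F. \<Sum>b'\<in>F. inner (cscale J (c b) (h b)) (cscale J (c b') (h b')))"
    by (simp add: inner_sum_left inner_sum_right) (rule sum.swap)
  also have "\<dots> = (\<Sum>b\<in>F. \<Sum>b'\<in>F. if b = b' then (cmod (c b))\<^sup>2 else 0)"
  proof (intro sum.cong refl)
    fix b b' assume bb: "b \<in> F" "b' \<in> F"
    have "cinner J (h b) (h b') = (if b = b' then 1 else 0)"
      using onb_orth[OF onb, of "h b" "h b'"] sub bb inj by (force simp: inj_on_def)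
    then show "inner (cscale J (c b) (h b)) (cscale J (c b') (h b')) = (if b = b' then (cmod (c b))\<^sup>2 else 0)"
      using inner_cscale[OF cs] cmod_power2[of "c b"] by (auto simp: power2_eq_square)
  qed
  also have "\<dots> = (\<Sum>b\<in>F. (cmod (c b))\<^sup>2)"
    using fin by (simp add: sum.delta)
  finally show ?thesis .
qed

lemma ext_sum:
  assumes "finite K" "F \<subseteq> K"
  shows "(\<Sum>b\<in>F. cscale J (c b) (h b)) = (\<Sum>b\<in>K. cscale J (if b \<in> F then c b else 0) (h b))"
  by (rule sum.mono_neutral_cong_left) (use assms in auto)

lemma onb_unitary:
  fixes J :: "'a::{real_inner,complete_space} \<Rightarrow> 'a" and J' :: "'b::{real_inner,complete_space} \<Rightarrow> 'b"
  assumes cs: "complex_structure J" and cs': "complex_structure J'"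
    and onb: "c_onb J B" and onb': "c_onb J' B'" and bij: "bij_betw f B B'"
  shows "\<exists>g. cunitary J J' g"
proof -
  have injf: "inj_on f B" and fB: "f ` B = B'" using bij by (auto simp: bij_betw_def)
  define sB where "sB c F = (\<Sum>b\<in>F. cscale J (c b) b)" for c F
  define tB where "tB c F = (\<Sum>b\<in>F. cscale J' (c b) (f b))" for c F
  have nsB: "(norm (sB c F))\<^sup>2 = (\<Sum>b\<in>F. (cmod (c b))\<^sup>2)" if "finite F" "F \<subseteq> B" for c F
    unfolding sB_def using norm_sum_onb[OF cs onb that(1), of id c] that by simp
  have ntB: "(norm (tB c F))\<^sup>2 = (\<Sum>b\<in>F. (cmod (c b))\<^sup>2)" if "finite F" "F \<subseteq> B" for c F
    unfolding tB_def using norm_sum_onb[OF cs' onb' that(1), of f c] that injf fB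
    by (auto intro: inj_on_subset)
  have wd: "tB c F = tB d G" if "finite F" "F \<subseteq> B" "finite G" "G \<subseteq> B" "sB c F = sB d G" for c d F G
  proof -
    define K where "K = F \<union> G"
    define c' where "c' b = (if b \<in> F then c b else 0)" for b
    define d' where "d' b = (if b \<in> G then d b else 0)" for b
    have K: "finite K" "K \<subseteq> B" "F \<subseteq> K" "G \<subseteq> K" using that by (auto simp: K_def)
    have sc: "sB c F = sB c' K" "sB d G = sB d' K" "tB c F = tB c' K" "tB d G = tB d' K"
      unfolding sB_def tB_def c'_def d'_def
      by (rule ext_sum[OF K(1) K(3)] ext_sum[OF K(1) K(4)])+
    have "sB (\<lambda>b. c' b - d' b) K = 0"
      using sc that(5) unfolding sB_def by (simp add: cscale_diffc sum_subtractf)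
    then have "(\<Sum>b\<in>K. (cmod (c' b - d' b))\<^sup>2) = 0" using nsB[OF K(1,2), of "\<lambda>b. c' b - d' b"] by simp
    then have "\<forall>b\<in>K. (cmod (c' b - d' b))\<^sup>2 = 0" using K(1) by (simp add: sum_nonneg_eq_0_iff)
    then have "\<forall>b\<in>K. c' b = d' b" by simp
    then have "tB c' K = tB d' K" unfolding tB_def by simp
    then show ?thesis using sc by simp
  qed
  define T0 where "T0 x = (SOME y. \<exists>c F. finite F \<and> F \<subseteq> B \<and> x = sB c F \<and> y = tB c F)" for x
  have T0eq: "T0 (sB c F) = tB c F" if "finite F" "F \<subseteq> B" for c F
  proof -
    have ex: "\<exists>y. \<exists>c' F'. finite F' \<and> F' \<subseteq> B \<and> sB c F = sB c' F' \<and> y = tB c' F'" using that by blast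
    have "\<exists>c' F'. finite F' \<and> F' \<subseteq> B \<and> sB c F = sB c' F' \<and> T0 (sB c F) = tB c' F'"
      using someI_ex[OF ex] unfolding T0_def by blast
    then obtain c' F' where cf: "finite F'" "F' \<subseteq> B" "sB c F = sB c' F'" "T0 (sB c F) = tB c' F'"
      by blast
    show ?thesis using wd[OF that cf(1,2,3)] cf(4) by simp
  qed
  define D where "D = cspan J B"
  have Dchar: "D = {sB c F | c F. finite F \<and> F \<subseteq> B}" unfolding D_def cspan_def sB_def by blast
  have Dmem: "x \<in> D \<longleftrightarrow> (\<exists>c F. finite F \<and> F \<subseteq> B \<and> x = sB c F)" for x
    unfolding Dchar by blast
  have merge: "\<exists>K c' d'. finite K \<and> K \<subseteq> B \<and> sB c F = sB c' K \<and> sB d G = sB d' K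
       \<and> tB c F = tB c' K \<and> tB d G = tB d' K"
    if "finite F" "F \<subseteq> B" "finite G" "G \<subseteq> B" for c d F G
  proof -
    define K where "K = F \<union> G"
    have K: "finite K" "K \<subseteq> B" "F \<subseteq> K" "G \<subseteq> K" using that by (auto simp: K_def)
    show ?thesis unfolding sB_def tB_def
      by (rule exI[of _ K], rule exI[of _ "\<lambda>b. if b \<in> F then c b else 0"], rule exI[of _ "\<lambda>b. if b \<in> G then d b else 0"])
        (intro conjI K(1,2) ext_sum[OF K(1) K(3)] ext_sum[OF K(1) K(4)])
  qed
  have addB: "sB c K + sB d K = sB (\<lambda>b. c b + d b) K" "tB c K + tB d K = tB (\<lambda>b. c b + d b) K" for c d K
    unfolding sB_def tB_def by (simp_all add: cscale_addc sum.distrib)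
  have scB: "cscale J a (sB c K) = sB (\<lambda>b. a * c b) K" "cscale J' a (tB c K) = tB (\<lambda>b. a * c b) K" for a c K
    unfolding sB_def tB_def by (simp_all add: cscale_sum[OF cs] cscale_sum[OF cs'] cscale_mult[OF cs] cscale_mult[OF cs'])
  have "\<exists>g. cunitary J J' g"
  proof (rule extend_unitary[OF cs cs', where D=D and Tz=T0])
    show "closure D = UNIV" using onb by (simp add: D_def c_onb_def)
    show "x + y \<in> D" if xy: "x \<in> D" "y \<in> D" for x y
    proof -
      obtain c F d G where cd: "finite F" "F \<subseteq> B" "finite G" "G \<subseteq> B" "x = sB c F" "y = sB d G"
        using Dmem xy by metis
      obtain K c' d' where K: "finite K" "K \<subseteq> B" "sB c F = sB c' K" "sB d G = sB d' K"
        using merge[OF cd(1-4), of c d] by blast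
      note K = K(1,2) K(3)[folded cd(5)] K(4)[folded cd(6)]
      then have "x + y = sB (\<lambda>b. c' b + d' b) K" using addB by simp
      then show ?thesis unfolding Dmem using K by blast
    qed
    show "cscale J a x \<in> D" if xy: "x \<in> D" for a x
    proof -
      obtain c F where F: "finite F" "F \<subseteq> B" "x = sB c F" using Dmem xy by metis
      then have "cscale J a x = sB (\<lambda>b. a * c b) F" using scB by simp
      then show ?thesis unfolding Dmem using F by blast
    qed
    show "T0 (x + y) = T0 x + T0 y" if xy: "x \<in> D" "y \<in> D" for x y
    proof -
      obtain c F d G where cd: "finite F" "F \<subseteq> B" "finite G" "G \<subseteq> B" "x = sB c F" "y = sB d G"
        using Dmem xy by metis
      obtain K c' d' where K: "finite K" "K \<subseteq> B" "sB c F = sB c' K" "sB d G = sB d' K"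
        "tB c F = tB c' K" "tB d G = tB d' K"
        using merge[OF cd(1-4), of c d] by blast
      have "x + y = sB (\<lambda>b. c' b + d' b) K" using K cd addB by simp
      then have "T0 (x + y) = tB (\<lambda>b. c' b + d' b) K" using T0eq[OF K(1,2)] by simp
      also have "\<dots> = tB c F + tB d G" using K addB by simp
      also have "\<dots> = T0 x + T0 y" using cd T0eq by simp
      finally show ?thesis .
    qed
    show "T0 (cscale J a x) = cscale J' a (T0 x)" if xy: "x \<in> D" for a x
    proof -
      obtain c F where F: "finite F" "F \<subseteq> B" "x = sB c F" using Dmem xy by metis
      have "T0 (cscale J a x) = T0 (sB (\<lambda>b. a * c b) F)" using F scB by simp
      also have "\<dots> = tB (\<lambda>b. a * c b) F" using T0eq F by blast
      also have "\<dots> = cscale J' a (tB c F)" using scB by simp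
      also have "\<dots> = cscale J' a (T0 x)" using T0eq F by simp
      finally show ?thesis .
    qed
    show "norm (T0 x) = norm x" if xy: "x \<in> D" for x
    proof -
      obtain c F where F: "finite F" "F \<subseteq> B" "x = sB c F" using Dmem xy by metis
      have "(norm (T0 x))\<^sup>2 = (norm x)\<^sup>2" using F T0eq nsB ntB by simp
      then show ?thesis by (rule power2_eq_imp_eq) auto
    qed
    show "closure (T0 ` D) = UNIV"
    proof -
      have "cspan J' B' \<subseteq> T0 ` D"
      proof
        fix y assume "y \<in> cspan J' B'"
        then obtain F' c where F': "finite F'" "F' \<subseteq> B'" "y = (\<Sum>b\<in>F'. cscale J' (c b) b)"
          unfolding cspan_def by blast
        define F where "F = inv_into B f ` F'"
        have finF: "finite F" using F'(1) by (simp add: F_def)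
        have FB: "F \<subseteq> B" using F' fB by (auto simp: F_def inv_into_into)
        have fi: "f (inv_into B f z) = z" if "z \<in> F'" for z
          using that F'(2) fB f_inv_into_f[of z f B] by blast
        have fF: "f ` F = F'" unfolding F_def image_image using fi by simp
        have injF: "inj_on f F" using injf FB by (rule inj_on_subset)
        have "tB (\<lambda>b. c (f b)) F = (\<Sum>b\<in>f ` F. cscale J' (c b) b)"
          unfolding tB_def by (simp add: sum.reindex[OF injF])
        then have ty: "tB (\<lambda>b. c (f b)) F = y" using fF F'(3) by simp
        have "sB (\<lambda>b. c (f b)) F \<in> D" unfolding Dmem using finF FB by blast
        moreover have "y = T0 (sB (\<lambda>b. c (f b)) F)" using T0eq[OF finF FB] ty by simp
        ultimately show "y \<in> T0 ` D" by (rule rev_image_eqI)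
      qed
      then have "closure (cspan J' B') \<subseteq> closure (T0 ` D)" by (rule closure_mono)
      then show ?thesis using onb' by (auto simp: c_onb_def)
    qed
  qed
  then show ?thesis .
qed



lemma phase_unitary:
  assumes cs: "complex_structure J" and pq: "p\<^sup>2 + q\<^sup>2 = 1"
  shows "cunitary J J (\<lambda>x. p *\<^sub>R x + q *\<^sub>R J x)"
proof (rule cunitaryI_lin[OF cs cs])
  show "linear (\<lambda>x. p *\<^sub>R x + q *\<^sub>R J x)"
    by (rule linearI) (simp_all add: cs_add[OF cs] cs_scale[OF cs] algebra_simps)
  show "p *\<^sub>R J x + q *\<^sub>R J (J x) = J (p *\<^sub>R x + q *\<^sub>R J x)" for x
    by (simp add: cs_add[OF cs] cs_scale[OF cs])
  show "norm (p *\<^sub>R x + q *\<^sub>R J x) = norm x" for x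
  proof -
    have "(norm (p *\<^sub>R x + q *\<^sub>R J x))\<^sup>2 = inner (p *\<^sub>R x + q *\<^sub>R J x) (p *\<^sub>R x + q *\<^sub>R J x)"
      by (simp only: power2_norm_eq_inner)
    also have "\<dots> = (p\<^sup>2 + q\<^sup>2) * inner x x"
      by (simp add: inner_add_left inner_add_right cs_inner[OF cs]
          cs_self[OF cs] inner_commute[of "J x" x] algebra_simps power2_eq_square)
    also have "\<dots> = (p\<^sup>2 + q\<^sup>2) * (norm x)\<^sup>2" by (simp only: power2_norm_eq_inner)
    finally have "(norm (p *\<^sub>R x + q *\<^sub>R J x))\<^sup>2 = (p\<^sup>2 + q\<^sup>2) * (norm x)\<^sup>2" .
    then show ?thesis using pq by (simp add: power2_eq_imp_eq)
  qed
  show "surj (\<lambda>x. p *\<^sub>R x + q *\<^sub>R J x)"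
  proof (rule surjI)
    fix x
    have "p *\<^sub>R (p *\<^sub>R x - q *\<^sub>R J x) + q *\<^sub>R J (p *\<^sub>R x - q *\<^sub>R J x) = (p\<^sup>2 + q\<^sup>2) *\<^sub>R x"
      by (simp add: cs_diff[OF cs] cs_scale[OF cs] cs_JJ[OF cs] algebra_simps power2_eq_square)
    then show "p *\<^sub>R (p *\<^sub>R x - q *\<^sub>R J x) + q *\<^sub>R J (p *\<^sub>R x - q *\<^sub>R J x) = x" using pq by simp
  qed
qed

definition hh :: "('a::real_inner \<Rightarrow> 'a) \<Rightarrow> 'a \<Rightarrow> 'a \<Rightarrow> 'a" where
  "hh J w x = x - (2 / inner w w) *\<^sub>R (inner w x *\<^sub>R w + inner (J w) x *\<^sub>R J w)"

lemma hh_inner_w: assumes cs: "complex_structure J" and "w \<noteq> 0"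
  shows "inner w (hh J w x) = - inner w x"
proof -
  have N: "inner w w \<noteq> 0" using assms by simp
  have "inner w (hh J w x) = inner w x - (2 / inner w w) * (inner w x * inner w w)"
    by (simp add: hh_def inner_diff_right inner_add_right cs_self[OF cs])
  also have "\<dots> = - inner w x" using N by (simp add: field_simps)
  finally show ?thesis .
qed

lemma hh_inner_Jw: assumes cs: "complex_structure J" and "w \<noteq> 0"
  shows "inner (J w) (hh J w x) = - inner (J w) x"
proof -
  have N: "inner w w \<noteq> 0" using assms by simp
  have "inner (J w) (hh J w x) = inner (J w) x - (2 / inner w w) * (inner (J w) x * inner w w)"
    by (simp add: hh_def inner_diff_right inner_add_right cs_self[OF cs] cs_inner[OF cs] inner_commute[of "J w" w])
  also have "\<dots> = - inner (J w) x" using N by (simp add: field_simps)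
  finally show ?thesis .
qed

lemma hh_zero[simp]: "hh J 0 x = x" by (simp add: hh_def)

lemma hh_invol: assumes cs: "complex_structure J" shows "hh J w (hh J w x) = x"
proof (cases "w = 0")
  case False
  have "hh J w (hh J w x) = hh J w x - (2 / inner w w) *\<^sub>R (- inner w x *\<^sub>R w + - inner (J w) x *\<^sub>R J w)"
    unfolding hh_def[of J w "hh J w x"] using hh_inner_w[OF cs False] hh_inner_Jw[OF cs False] by simp
  also have "\<dots> = x" by (simp add: hh_def algebra_simps)
  finally show ?thesis .
qed simp

lemma hh_J: assumes cs: "complex_structure J" shows "hh J w (J x) = J (hh J w x)"
  using cs_swap[OF cs, of w x]
  by (simp add: hh_def cs_diff[OF cs] cs_add[OF cs] cs_scale[OF cs] cs_JJ[OF cs] cs_inner[OF cs] algebra_simps)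

lemma hh_lin: "linear (hh J w)"
  by (rule linearI) (simp_all add: hh_def inner_add_right algebra_simps)

lemma hh_norm: assumes cs: "complex_structure J" shows "norm (hh J w x) = norm x"
proof (cases "w = 0")
  case False
  have N: "inner w w \<noteq> 0" using False by simp
  define s where "s = inner w x"
  define t where "t = inner (J w) x"
  have "inner (hh J w x) (hh J w x) = inner x (hh J w x) - (2 / inner w w) * (inner w (hh J w x) * s + inner (J w) (hh J w x) * t)"
    by (simp add: hh_def[of J w x] inner_diff_left inner_add_left s_def t_def algebra_simps)
  also have "inner x (hh J w x) = inner x x - (2 / inner w w) * (s * s + t * t)"
    by (simp add: hh_def inner_diff_right inner_add_right s_def t_def inner_commute)
  finally have "inner (hh J w x) (hh J w x) = inner x x"
    using hh_inner_w[OF cs False, of x] hh_inner_Jw[OF cs False, of x] N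
    by (simp add: s_def[symmetric] t_def[symmetric] field_simps)
  then show ?thesis by (simp add: norm_eq_sqrt_inner)
qed simp

lemma hh_unitary: assumes cs: "complex_structure J" shows "cunitary J J (hh J w)"
  by (rule cunitaryI_lin[OF cs cs hh_lin hh_J[OF cs] hh_norm[OF cs]]) (metis hh_invol[OF cs] surjI)

lemma unit_map:
  assumes cs: "complex_structure J" and u: "norm u = 1" and v: "norm v = 1"
  shows "\<exists>R. cunitary J J R \<and> R u = v"
proof -
  define a where "a = inner u v"
  define b where "b = inner (J u) v"
  define r where "r = sqrt (a\<^sup>2 + b\<^sup>2)"
  define p where "p = (if r = 0 then 1 else a / r)"
  define q where "q = (if r = 0 then 0 else b / r)"
  have r2: "r\<^sup>2 = a\<^sup>2 + b\<^sup>2" unfolding r_def by simp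
  have pq: "p\<^sup>2 + q\<^sup>2 = 1"
  proof (cases "r = 0")
    case False
    have "p\<^sup>2 + q\<^sup>2 = (a\<^sup>2 + b\<^sup>2) / r\<^sup>2" using False by (simp add: p_def q_def power_divide add_divide_distrib)
    then show ?thesis using False r2 by (auto simp: r_def)
  qed (simp add: p_def q_def)
  have pqab: "p * b - q * a = 0"
  proof (cases "r = 0")
    case True then have "a = 0" "b = 0" using r2 by (auto simp: power2_eq_square add_nonneg_eq_0_iff)
    then show ?thesis by simp
  qed (simp add: p_def q_def field_simps)
  define P where "P x = p *\<^sub>R x + q *\<^sub>R J x" for x
  have P: "cunitary J J P" unfolding P_def[abs_def] by (rule phase_unitary[OF cs pq])
  define u' where "u' = P u"
  have nu': "norm u' = 1" using P u unfolding u'_def cunitary_def by simp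
  have Ju'v: "inner (J u') v = 0"
    using pqab by (simp add: u'_def P_def cs_add[OF cs] cs_scale[OF cs] cs_JJ[OF cs] inner_add_left inner_diff_left a_def b_def)
  define w where "w = u' - v"
  have hw: "hh J w u' = v"
  proof (cases "w = 0")
    case True then show ?thesis by (simp add: w_def)
  next
    case False
    define m where "m = inner v u'"
    have iu: "inner u' u' = 1" "inner v v = 1" using nu' v by (simp_all add: norm_eq_sqrt_inner)
    have N: "inner w w = 2 - 2 * m"
      using iu by (simp add: w_def m_def inner_diff_left inner_diff_right inner_commute)
    have s: "inner w u' = 1 - m" using iu by (simp add: w_def m_def inner_diff_left)
    have t: "inner (J w) u' = 0"
      using cs_swap[OF cs, of v u'] Ju'v cs_self[OF cs, of u']
      by (simp add: w_def cs_diff[OF cs] inner_diff_left inner_diff_right inner_commute)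
    have "inner w w \<noteq> 0" using False by simp
    then have "m \<noteq> 1" using N by auto
    then have "hh J w u' = u' - w" using N s t by (simp add: hh_def)
    then show ?thesis by (simp add: w_def)
  qed
  have "cunitary J J (hh J w \<circ> P)" by (rule cunitary_comp[OF P hh_unitary[OF cs]])
  moreover have "(hh J w \<circ> P) u = v" using hw by (simp add: u'_def)
  ultimately show ?thesis by blast
qed



lemma cunitary_zero: assumes "cunitary J J' U" shows "U 0 = 0"
  using cunitary_diff[OF assms, of 0 0] by simp

lemma shift_tensor:
  assumes "k < n"
  shows "tensor_op n J (shift_mat n) U f k = U (f (if k = 0 then n - 1 else k - 1))"
proof -
  define j0 where "j0 = (if k = 0 then n - 1 else k - 1)"
  have j0n: "j0 < n" using assms by (auto simp: j0_def)
  have iff: "(k = (j + 1) mod n) \<longleftrightarrow> j = j0" if "j < n" for j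
  proof (cases "j + 1 < n")
    case True then show ?thesis using assms that by (auto simp: j0_def)
  next
    case False then have "j + 1 = n" using that by simp
    then show ?thesis using assms that by (auto simp: j0_def)
  qed
  have "tensor_op n J (shift_mat n) U f k = (\<Sum>j<n. cscale J (if j = j0 then 1 else 0) (U (f j)))"
    unfolding tensor_op_def shift_mat_def using assms iff by (auto intro!: sum.cong)
  also have "\<dots> = (\<Sum>j<n. if j = j0 then U (f j) else 0)" by (rule sum.cong) simp_all
  also have "\<dots> = U (f j0)" using j0n by simp
  finally show ?thesis unfolding j0_def .
qed

theorem theorem1:
  fixes n :: nat
    and J :: "'a::{real_inner,complete_space} \<Rightarrow> 'a"
    and J' :: "'b::{real_inner,complete_space} \<Rightarrow> 'b"
    and Ur :: "'a \<Rightarrow> 'a" and Ur' :: "'b \<Rightarrow> 'b"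
    and \<psi>0 :: 'a and \<psi>0' :: 'b
  assumes "n \<ge> 1"
    and "separable_hilbert J" and "separable_hilbert J'"
    and "same_hilbert_dim J J'"
    and "cunitary J J Ur" and "cunitary J' J' Ur'"
    and "Ur ^^ n = id" and "Ur' ^^ n = id"
    and "norm \<psi>0 = 1" and "norm \<psi>0' = 1"
  shows "\<exists>S. tunitary n J J' S \<and>
     (\<forall>\<tau><n. ket \<tau> ((Ur' ^^ \<tau>) \<psi>0') = S (ket \<tau> ((Ur ^^ \<tau>) \<psi>0))) \<and>
     (\<forall>g\<in>clock_space n. tensor_op n J' (shift_mat n) Ur' g
          = S (tensor_op n J (shift_mat n) Ur (inv_into (clock_space n) S g)))"
proof -
  note n1 = assms(1)
  have cs: "complex_structure J" and cs': "complex_structure J'"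
    using assms(2,3) by (simp_all add: separable_hilbert_def)
  obtain B B' f where onb: "c_onb J B" and onb': "c_onb J' B'" and bij: "bij_betw f B B'"
    using assms(4) unfolding same_hilbert_dim_def by blast
  obtain T where T: "cunitary J J' T" using onb_unitary[OF cs cs' onb onb' bij] by blast
  have nT: "norm (T \<psi>0) = 1" using T assms(9) by (simp add: cunitary_def)
  obtain R where R: "cunitary J' J' R" and RT: "R (T \<psi>0) = \<psi>0'"
    using unit_map[OF cs' nT assms(10)] by blast
  define W where "W = R \<circ> T"
  have W: "cunitary J J' W" unfolding W_def by (rule cunitary_comp[OF T R])
  have W0: "W \<psi>0 = \<psi>0'" using RT by (simp add: W_def)
  have Urn: "(Ur ^^ n) x = x" for x using assms(7) by simp
  have Urn': "(Ur' ^^ n) x = x" for x using assms(8) by simp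
  define V where "V k = (Ur' ^^ k) \<circ> W \<circ> (Ur ^^ (n - k))" for k
  have V: "cunitary J J' (V k)" for k
    unfolding V_def
    by (rule cunitary_comp[OF cunitary_funpow[OF assms(5)] cunitary_comp[OF W cunitary_funpow[OF assms(6)]]])
  define S where "S h = (\<lambda>k. if k < n then V k (h k) else 0)" for h
  have Sclock: "S h \<in> clock_space n" for h by (simp add: S_def clock_space_def)
  have tu: "tunitary n J J' S"
    unfolding tunitary_def
  proof (intro conjI ballI allI)
    have "inj_on S (clock_space n)"
    proof (rule inj_onI)
      fix h1 h2 assume h: "h1 \<in> clock_space n" "h2 \<in> clock_space n" "S h1 = S h2"
      show "h1 = h2"
      proof
        fix k show "h1 k = h2 k"
        proof (cases "k < n")
          case True
          then have "V k (h1 k) = V k (h2 k)" using fun_cong[OF h(3), of k] by (simp add: S_def)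
          then show ?thesis using cunitary_inj[OF V] by (simp add: inj_eq)
        next
          case False then show ?thesis using h(1,2) by (simp add: clock_space_def)
        qed
      qed
    qed
    moreover have "S ` clock_space n = clock_space n"
    proof
      show "S ` clock_space n \<subseteq> clock_space n" using Sclock by auto
      show "clock_space n \<subseteq> S ` clock_space n"
      proof
        fix g :: "nat \<Rightarrow> 'b" assume g: "g \<in> clock_space n"
        define h where "h k = (if k < n then inv (V k) (g k) else 0)" for k
        have "h \<in> clock_space n" by (simp add: h_def clock_space_def)
        moreover have "S h = g"
        proof
          fix k show "S h k = g k"
          proof (cases "k < n")
            case True
            have "surj (V k)" using V by (simp add: cunitary_def)
            then show ?thesis using True by (simp add: S_def h_def surj_f_inv_f)
          next
            case False then show ?thesis using g by (simp add: S_def clock_space_def)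
          qed
        qed
        ultimately show "g \<in> S ` clock_space n" by blast
      qed
    qed
    ultimately show "bij_betw S (clock_space n) (clock_space n)" by (simp add: bij_betw_def)
  next
    fix h1 h2 show "S (tadd h1 h2) = tadd (S h1) (S h2)"
      using V by (auto simp: S_def tadd_def cunitary_def)
  next
    fix c h show "S (tcscale J c h) = tcscale J' c (S h)"
      using V by (auto simp: S_def tcscale_def cunitary_def cscale_zero_right[OF cs'])
  next
    fix h show "tnorm n (S h) = tnorm n h"
      using V by (simp add: S_def tnorm_def cunitary_def)
  qed
  have ketp: "ket \<tau> ((Ur' ^^ \<tau>) \<psi>0') = S (ket \<tau> ((Ur ^^ \<tau>) \<psi>0))" if "\<tau> < n" for \<tau>
  proof
    fix k show "ket \<tau> ((Ur' ^^ \<tau>) \<psi>0') k = S (ket \<tau> ((Ur ^^ \<tau>) \<psi>0)) k"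
    proof (cases "k = \<tau>")
      case True
      have "(Ur ^^ (n - \<tau>)) ((Ur ^^ \<tau>) \<psi>0) = (Ur ^^ n) \<psi>0"
      proof -
        have "(Ur ^^ (n - \<tau>)) ((Ur ^^ \<tau>) \<psi>0) = (Ur ^^ (n - \<tau> + \<tau>)) \<psi>0"
          by (simp add: funpow_add)
        then show ?thesis using that by simp
      qed
      then show ?thesis using True that W0 Urn by (simp add: ket_def S_def V_def)
    next
      case False then show ?thesis using cunitary_zero[OF V] by (simp add: ket_def S_def)
    qed
  qed
  have shiftp: "tensor_op n J' (shift_mat n) Ur' g
          = S (tensor_op n J (shift_mat n) Ur (inv_into (clock_space n) S g))"
    if g: "g \<in> clock_space n" for g
  proof -
    have bS: "bij_betw S (clock_space n) (clock_space n)" using tu by (simp add: tunitary_def)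
    define h where "h = inv_into (clock_space n) S g"
    have gS: "g \<in> S ` clock_space n" using bS g by (simp add: bij_betw_def)
    have Sh: "S h = g" unfolding h_def using gS by (rule f_inv_into_f)
    have "tensor_op n J' (shift_mat n) Ur' (S h) = S (tensor_op n J (shift_mat n) Ur h)"
    proof
      fix k show "tensor_op n J' (shift_mat n) Ur' (S h) k = S (tensor_op n J (shift_mat n) Ur h) k"
      proof (cases "k < n")
        case False then show ?thesis by (simp add: tensor_op_def S_def)
      next
        case True
        show ?thesis
        proof (cases "k = 0")
          case True
          have n1': "n - (n - 1) = 1" "Suc (n - 1) = n" using n1 by auto
          have "Ur' ((Ur' ^^ (n - 1)) y) = y" for y
            using Urn'[of y] n1'(2) by (metis funpow.simps(2) comp_apply)
          then show ?thesis using True n1 \<open>k < n\<close>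
            by (simp add: shift_tensor S_def V_def n1'(1) Urn)
        next
          case False
          have "(Ur ^^ (n - k)) (Ur x) = (Ur ^^ (Suc n - k)) x" for x
          proof -
            have "Suc n - k = Suc (n - k)" using False \<open>k < n\<close> by simp
            then show ?thesis by (simp add: funpow_Suc_right del: funpow.simps)
          qed
          moreover have "Ur' ((Ur' ^^ (k - 1)) y) = (Ur' ^^ k) y" for y
          proof -
            have "k = Suc (k - 1)" using False by simp
            then show ?thesis by (metis funpow.simps(2) comp_apply)
          qed
          moreover have "k - 1 < n" "k - Suc 0 < n" using \<open>k < n\<close> by auto
          ultimately show ?thesis using False \<open>k < n\<close>
            by (simp add: shift_tensor S_def V_def)
        qed
      qed
    qed
    then show ?thesis using Sh h_def by simp
  qed
  show ?thesis using tu ketp shiftp by blast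
qed

end
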